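(* Let $G$ be a connected graph and $r\in\mathbb{N}$, and let $G_r$ be its $r$-local cover. Then $\mathcal{Z}_r(G_r)=\mathcal{Z}(G_r)$, both for the integral and for the binary cycle space.
   Context: Graphs may have loops and parallel edges and are viewed as 1-complexes; a cycle may be a loop or a pair of parallel edges; a closed walk once around a cycle $O$ traverses every edge of $O$ exactly once. $\pi_1^r(G,x_0)$ is the subgroup of $\pi_1(G,x_0)$ generated by the classes of closed walks $W_0QW_0^-$, $W_0$ a walk from $x_0$ to a vertex $y$, $Q$ a closed walk at $y$ once around a cycle of length at most $r$, $W_0^-$ the reverse of $W_0$. The $r$-local covering $p_r:G_r\to G$ is the connected normal covering with characteristic subgroup $\pi_1^r(G,x_0)$. Cycle spaces: fix an orientation $\vec e$ of each edge of a graph $X$. For $R=\mathbb{Z}$ (integral) or $R=\mathbb{Z}/2\mathbb{Z}$ (binary), $\mathcal{Z}(X)$ is the $R$-module of finitely supported functions $E(X)\to R$ such that at every vertex the sum of values of incoming edges equals the sum over outgoing edges. A closed walk $W=v_0e_0v_1\dots e_{k-1}v_k$ once around a cycle induces $z_W\in\mathcal{Z}(X)$ with $z_W(e_i)=1$ if $\vec e_i$ points from $v_i$ to $v_{i+1}$, $z_W(e_i)=-1$ otherwise, and $0$ on other edges. $\mathcal{Z}_r(X)$ is the submodule generated by the $z_W$ for cycles of length at most $r$. *)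

theory Defs
  imports Main "HOL-Library.Z2" "Graph_Theory.Digraph"
begin

text \<open>
A graph (loops and parallel edges allowed) is a well-formed pre_digraph G; its
arcs are the edges, and tail/head give the FIXED orientation of each edge used
for the cycle spaces.  Walks are lists of darts (edge, direction): the dart
(e,True) traverses e from tail to head, (e,False) from head to tail.
\<close>

type_synonym 'e dart = "'e \<times> bool"

definition darts :: "('v,'e) pre_digraph \<Rightarrow> 'e dart set" where
  "darts G = arcs G \<times> UNIV"

definition dstart :: "('v,'e) pre_digraph \<Rightarrow> 'e dart \<Rightarrow> 'v" where
  "dstart G d = (if snd d then tail G (fst d) else head G (fst d))"

definition dend :: "('v,'e) pre_digraph \<Rightarrow> 'e dart \<Rightarrow> 'v" where
  "dend G d = (if snd d then head G (fst d) else tail G (fst d))"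

definition drev :: "'e dart \<Rightarrow> 'e dart" where
  "drev d = (fst d, \<not> snd d)"

fun is_walk :: "('v,'e) pre_digraph \<Rightarrow> 'v \<Rightarrow> 'e dart list \<Rightarrow> 'v \<Rightarrow> bool" where
  "is_walk G u [] v \<longleftrightarrow> u = v \<and> u \<in> verts G"
| "is_walk G u (d # ds) v \<longleftrightarrow> u \<in> verts G \<and> d \<in> darts G \<and> dstart G d = u \<and> is_walk G (dend G d) ds v"

definition rev_walk :: "'e dart list \<Rightarrow> 'e dart list" where
  "rev_walk W = rev (map drev W)"

definition backtrack_red :: "('e dart list \<times> 'e dart list) set" where
  "backtrack_red = {(as @ [d, drev d] @ bs, as @ bs) | as bs d. True}"

definition homotopic :: "'e dart list \<Rightarrow> 'e dart list \<Rightarrow> bool" where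
  "homotopic W W' \<longleftrightarrow> (W, W') \<in> (backtrack_red \<union> backtrack_red\<inverse>)\<^sup>*"

text \<open>Q is a closed walk at y once around a cycle of length k:
  k \<ge> 1 darts, pairwise distinct edges, pairwise distinct vertices v_0..v_{k-1}.
  (k = 1: a loop; k = 2: a pair of parallel edges.)\<close>
definition once_around_cycle :: "('v,'e) pre_digraph \<Rightarrow> 'v \<Rightarrow> 'e dart list \<Rightarrow> bool" where
  "once_around_cycle G y Q \<longleftrightarrow> Q \<noteq> [] \<and> is_walk G y Q y
     \<and> distinct (map fst Q) \<and> distinct (map (dstart G) Q)"

definition connected_graph :: "('v,'e) pre_digraph \<Rightarrow> bool" where
  "connected_graph G \<longleftrightarrow> verts G \<noteq> {} \<and> (\<forall>u\<in>verts G. \<forall>v\<in>verts G. \<exists>W. is_walk G u W v)"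

definition r_lasso :: "('v,'e) pre_digraph \<Rightarrow> nat \<Rightarrow> 'v \<Rightarrow> 'e dart list \<Rightarrow> bool" where
  "r_lasso G r x0 L \<longleftrightarrow> (\<exists>W0 y Q. is_walk G x0 W0 y \<and> once_around_cycle G y Q
       \<and> length Q \<le> r \<and> L = W0 @ Q @ rev_walk W0)"

text \<open>The closed walks at x0 whose homotopy class lies in pi_1^r(G,x0), the subgroup
  generated by the classes of r-lassos.  (The inverse of an r-lasso is an r-lasso, so
  the subgroup consists of the classes of finite products of r-lassos.)\<close>
definition pi1r_walks :: "('v,'e) pre_digraph \<Rightarrow> nat \<Rightarrow> 'v \<Rightarrow> 'e dart list set" where
  "pi1r_walks G r x0 = {W. is_walk G x0 W x0 \<and>
      (\<exists>Ls. (\<forall>L\<in>set Ls. r_lasso G r x0 L) \<and> homotopic W (concat Ls))}"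

definition graph_covering ::
  "('w,'f) pre_digraph \<Rightarrow> ('v,'e) pre_digraph \<Rightarrow> ('w \<Rightarrow> 'v) \<Rightarrow> ('f dart \<Rightarrow> 'e dart) \<Rightarrow> bool" where
  "graph_covering H G pV pD \<longleftrightarrow>
     pV ` verts H = verts G
   \<and> (\<forall>d\<in>darts H. pD d \<in> darts G \<and> dstart G (pD d) = pV (dstart H d) \<and> pD (drev d) = drev (pD d))
   \<and> (\<forall>y\<in>verts H. bij_betw pD {d\<in>darts H. dstart H d = y} {d\<in>darts G. dstart G d = pV y})"

text \<open>The r-local covering: a connected covering (H, y0) \<rightarrow> (G, x0) whose characteristic
  subgroup p_*(pi_1(H,y0)) equals pi_1^r(G,x0), i.e. the classes of projections of closed
  walks at y0 are exactly the classes in pi_1^r(G,x0).\<close>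
definition r_local_covering ::
  "nat \<Rightarrow> ('v,'e) pre_digraph \<Rightarrow> 'v \<Rightarrow> ('w,'f) pre_digraph \<Rightarrow> 'w
     \<Rightarrow> ('w \<Rightarrow> 'v) \<Rightarrow> ('f dart \<Rightarrow> 'e dart) \<Rightarrow> bool" where
  "r_local_covering r G x0 H y0 pV pD \<longleftrightarrow>
     wf_digraph H \<and> connected_graph H \<and> graph_covering H G pV pD
   \<and> y0 \<in> verts H \<and> pV y0 = x0
   \<and> (\<forall>W. is_walk G x0 W x0 \<longrightarrow>
        (W \<in> pi1r_walks G r x0 \<longleftrightarrow> (\<exists>W'. is_walk H y0 W' y0 \<and> homotopic (map pD W') W)))"

text \<open>Cycle space over a ring R (integral: int, binary: bit): finitely supported
  functions on the edges satisfying Kirchhoff's law at every vertex.\<close>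
definition cycle_space :: "('v,'e) pre_digraph \<Rightarrow> ('e \<Rightarrow> 'r::comm_ring_1) set" where
  "cycle_space X = {z. finite {e. z e \<noteq> 0} \<and> {e. z e \<noteq> 0} \<subseteq> arcs X \<and>
      (\<forall>v\<in>verts X. (\<Sum>e\<in>{e\<in>arcs X. head X e = v \<and> z e \<noteq> 0}. z e)
                  = (\<Sum>e\<in>{e\<in>arcs X. tail X e = v \<and> z e \<noteq> 0}. z e))}"

definition cycle_vector :: "('v,'e) pre_digraph \<Rightarrow> 'e dart list \<Rightarrow> 'e \<Rightarrow> 'r::comm_ring_1" where
  "cycle_vector X W e = (case find (\<lambda>d. fst d = e) W of
       None \<Rightarrow> 0
     | Some d \<Rightarrow> (if tail X e = dstart X d \<and> head X e = dend X d then 1 else - 1))"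

inductive_set gen_submodule :: "('e \<Rightarrow> 'r::comm_ring_1) set \<Rightarrow> ('e \<Rightarrow> 'r) set"
  for S where
  zero: "(\<lambda>_. 0) \<in> gen_submodule S"
| step: "z \<in> gen_submodule S \<Longrightarrow> w \<in> S \<Longrightarrow> (\<lambda>e. z e + c * w e) \<in> gen_submodule S"

definition cycle_space_r :: "nat \<Rightarrow> ('v,'e) pre_digraph \<Rightarrow> ('e \<Rightarrow> 'r::comm_ring_1) set" where
  "cycle_space_r r X = gen_submodule
     {cycle_vector X W | W y. once_around_cycle X y W \<and> length W \<le> r}"

end

theory Submission
  imports Defs "HOL-Library.Function_Algebras"
begin


section \<open>Walks\<close>

lemma is_walk_start: "is_walk G u W w \<Longrightarrow> u \<in> verts G"
  by (cases W) auto

lemma is_walk_append: "is_walk G u (as @ bs) w \<longleftrightarrow> (\<exists>m. is_walk G u as m \<and> is_walk G m bs w)"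
  by (induction as arbitrary: u) (auto dest: is_walk_start)

lemma is_walk_Cons_start: "is_walk G u (d # ds) w \<Longrightarrow> dstart G d = u"
  by simp

lemma dstart_drev[simp]: "dstart G (drev d) = dend G d"
  by (simp add: dstart_def dend_def drev_def)
lemma dend_drev[simp]: "dend G (drev d) = dstart G d"
  by (simp add: dstart_def dend_def drev_def)
lemma drev_drev[simp]: "drev (drev d) = d"
  by (simp add: drev_def)
lemma fst_drev[simp]: "fst (drev d) = fst d"
  by (simp add: drev_def)
lemma darts_drev[simp]: "drev d \<in> darts G \<longleftrightarrow> d \<in> darts G"
  by (simp add: darts_def drev_def mem_Times_iff)

lemma rev_walk_Nil[simp]: "rev_walk [] = []"
  by (simp add: rev_walk_def)
lemma rev_walk_Cons[simp]: "rev_walk (d # ds) = rev_walk ds @ [drev d]"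
  by (simp add: rev_walk_def)
lemma rev_walk_append[simp]: "rev_walk (xs @ ys) = rev_walk ys @ rev_walk xs"
  by (simp add: rev_walk_def)
lemma rev_walk_rev_walk[simp]: "rev_walk (rev_walk xs) = xs"
  by (induction xs) auto
lemma length_rev_walk[simp]: "length (rev_walk xs) = length xs"
  by (simp add: rev_walk_def)

lemma is_walk_rev: "is_walk G u W w \<Longrightarrow> is_walk G w (rev_walk W) u"
proof (induction W arbitrary: u)
  case Nil then show ?case by auto
next
  case (Cons d ds)
  then have "is_walk G w (rev_walk ds) (dend G d)" by simp
  moreover have "is_walk G (dend G d) [drev d] u"
    using Cons.prems by (auto dest: is_walk_start)
  ultimately show ?case by (auto simp: is_walk_append)
qed

lemma walk_dend_in:
  "is_walk G u P w \<Longrightarrow> d \<in> set P \<Longrightarrow> dstart G d \<in> set (map (dstart G) P) \<and> dend G d \<in> set (map (dstart G) P @ [w])"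
proof (induction P arbitrary: u)
  case Nil then show ?case by simp
next
  case (Cons d' ds)
  show ?case
  proof (cases "d = d'")
    case True
    then show ?thesis using Cons.prems by (cases ds) auto
  next
    case False
    then show ?thesis using Cons by auto
  qed
qed

lemma walk_last: "is_walk G u P w \<Longrightarrow> P \<noteq> [] \<Longrightarrow> dend G (last P) = w"
proof (induction P arbitrary: u)
  case Nil then show ?case by simp
next
  case (Cons d ds)
  then show ?case by (cases ds) auto
qed

lemma is_walk_end: "is_walk G u W w \<Longrightarrow> w \<in> verts G"
  by (induction W arbitrary: u) auto

section \<open>Generated submodules\<close>

lemma gen_add: assumes "a \<in> gen_submodule S" and b: "b \<in> gen_submodule S" shows "(\<lambda>e. a e + b e) \<in> gen_submodule S"
  using b
proof (induction b rule: gen_submodule.induct)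
  case zero then show ?case using assms by simp
next
  case (step z w c)
  then have "(\<lambda>e. (a e + z e) + c * w e) \<in> gen_submodule S"
    using gen_submodule.step by blast
  then show ?case by (simp add: add.assoc)
qed

lemma gen_smult: assumes "a \<in> gen_submodule S" shows "(\<lambda>e. c * a e) \<in> gen_submodule S"
  using assms
proof (induction a rule: gen_submodule.induct)
  case zero then show ?case using gen_submodule.zero by simp
next
  case (step z w c')
  then have "(\<lambda>e. c * z e + (c * c') * w e) \<in> gen_submodule S"
    using gen_submodule.step by blast
  then show ?case by (simp add: distrib_left mult.assoc)
qed

lemma gen_base: "w \<in> S \<Longrightarrow> w \<in> gen_submodule S"
  using gen_submodule.step[OF gen_submodule.zero, of w S 1] by simp

lemma gen_sub_gen: assumes "S \<subseteq> gen_submodule T" and a: "a \<in> gen_submodule S" shows "a \<in> gen_submodule T"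
  using a
proof (induction a rule: gen_submodule.induct)
  case zero then show ?case by (rule gen_submodule.zero)
next
  case (step z w c)
  then show ?case using gen_add gen_smult assms by blast
qed

section \<open>Cycle space\<close>

lemma sum_supp_eq:
  assumes "finite E" "E \<subseteq> arcs X" "{e. z e \<noteq> 0} \<subseteq> E"
  shows "(\<Sum>e\<in>{e\<in>E. P e}. z e) = (\<Sum>e\<in>{e\<in>arcs X. P e \<and> z e \<noteq> 0}. z e)"
  by (rule sum.mono_neutral_right) (use assms in auto)

lemma cs_intro:
  assumes "finite E" "E \<subseteq> arcs X" "{e. z e \<noteq> 0} \<subseteq> E"
    and "\<forall>v\<in>verts X. (\<Sum>e\<in>{e\<in>E. head X e = v}. z e) = (\<Sum>e\<in>{e\<in>E. tail X e = v}. z e)"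
  shows "z \<in> cycle_space X"
  unfolding cycle_space_def using assms sum_supp_eq[OF assms(1-3)]
  by (auto intro: finite_subset)

lemma cs_dest:
  assumes "z \<in> cycle_space X" "finite E" "E \<subseteq> arcs X" "{e. z e \<noteq> 0} \<subseteq> E" "v \<in> verts X"
  shows "(\<Sum>e\<in>{e\<in>E. head X e = v}. z e) = (\<Sum>e\<in>{e\<in>E. tail X e = v}. z e)"
  using assms sum_supp_eq[OF assms(2-4)] unfolding cycle_space_def by auto

lemma cs_supp: "z \<in> cycle_space X \<Longrightarrow> finite {e. z e \<noteq> 0} \<and> {e. z e \<noteq> 0} \<subseteq> arcs X"
  unfolding cycle_space_def by auto

lemma cs_comb:
  assumes "z \<in> cycle_space X" "w \<in> cycle_space X"
  shows "(\<lambda>e. z e + c * w e) \<in> cycle_space X"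
proof -
  define E where "E = {e. z e \<noteq> 0} \<union> {e. w e \<noteq> 0}"
  have E: "finite E" "E \<subseteq> arcs X" using cs_supp[OF assms(1)] cs_supp[OF assms(2)] by (auto simp: E_def)
  show ?thesis
  proof (rule cs_intro[OF E])
    show "{e. z e + c * w e \<noteq> 0} \<subseteq> E" by (auto simp: E_def)
    show "\<forall>v\<in>verts X. (\<Sum>e\<in>{e\<in>E. head X e = v}. z e + c * w e) = (\<Sum>e\<in>{e\<in>E. tail X e = v}. z e + c * w e)"
      using cs_dest[OF assms(1) E] cs_dest[OF assms(2) E]
      by (auto simp: sum.distrib sum_distrib_left[symmetric] E_def)
  qed
qed

lemma cs_zero: "(\<lambda>_. 0) \<in> cycle_space X"
  unfolding cycle_space_def by simp

lemma cs_neg: "z \<in> cycle_space X \<Longrightarrow> (\<lambda>e. - z e) \<in> cycle_space X"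
  using cs_comb[OF cs_zero, of z X "-1"] by simp


definition chi :: "'f dart \<Rightarrow> 'f \<Rightarrow> 'r::comm_ring_1" where
  "chi d e = (if e = fst d then (if snd d then 1 else -1) else 0)"

primrec phi :: "'f dart list \<Rightarrow> 'f \<Rightarrow> 'r::comm_ring_1" where
  "phi [] = 0"
| "phi (d # ds) = chi d + phi ds"

lemma chi_drev: "chi (drev d) = - chi d"
  by (auto simp: chi_def drev_def fun_eq_iff)

lemma phi_append[simp]: "phi (xs @ ys) = phi xs + phi ys"
  by (induction xs) (auto simp: add.assoc)

lemma phi_rev_walk: "phi (rev_walk xs) = - phi xs"
  by (induction xs) (auto simp: chi_drev)

lemma phi_supp: "phi W e \<noteq> 0 \<Longrightarrow> e \<in> fst ` set W"
  by (induction W) (auto simp: chi_def split: if_splits)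

lemma sum_chi: "finite E \<Longrightarrow> fst d \<in> E \<Longrightarrow> (\<Sum>e\<in>{e\<in>E. P e}. chi d e) = (if P (fst d) then (if snd d then 1 else -1) else 0)"
proof -
  assume fin: "finite E" and "fst d \<in> E"
  have "(\<Sum>e\<in>{e\<in>E. P e}. chi d e) = (\<Sum>e\<in>{e\<in>E. P e}. if e = fst d then (if snd d then 1 else -1) else 0)"
    by (simp add: chi_def)
  also have "\<dots> = (if fst d \<in> {e\<in>E. P e} then (if snd d then 1 else -1) else 0)"
    by (rule sum.delta) (use fin in simp)
  finally show ?thesis using \<open>fst d \<in> E\<close> by simp
qed

lemma walk_flow:
  fixes E :: "'f set"
  assumes "finite E"
  shows "is_walk X u W w \<Longrightarrow> fst ` set W \<subseteq> E \<Longrightarrow>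
    (\<Sum>e\<in>{e\<in>E. head X e = v}. (phi W e :: 'r::comm_ring_1)) - (\<Sum>e\<in>{e\<in>E. tail X e = v}. phi W e)
     = (if w = v then 1 else 0) - (if u = v then 1 else 0)"
proof (induction W arbitrary: u)
  case Nil then show ?case by simp
next
  case (Cons d ds)
  have fd: "fst d \<in> E" using Cons.prems by auto
  have IH: "(\<Sum>e\<in>{e\<in>E. head X e = v}. (phi ds e :: 'r)) - (\<Sum>e\<in>{e\<in>E. tail X e = v}. phi ds e)
     = (if w = v then 1 else 0) - (if dend X d = v then 1 else 0)"
    using Cons.IH[of "dend X d"] Cons.prems by simp
  have u: "u = dstart X d" using Cons.prems by simp
  have spl: "(\<Sum>e\<in>{e\<in>E. P e}. (phi (d # ds) e :: 'r)) = (\<Sum>e\<in>{e\<in>E. P e}. chi d e) + (\<Sum>e\<in>{e\<in>E. P e}. phi ds e)" for P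
    by (simp add: sum.distrib)
  have ch: "(\<Sum>e\<in>{e\<in>E. head X e = v}. (chi d e :: 'r)) - (\<Sum>e\<in>{e\<in>E. tail X e = v}. chi d e)
     = (if dend X d = v then 1 else 0) - (if dstart X d = v then 1 else 0)"
    unfolding sum_chi[OF assms fd] by (auto simp: dstart_def dend_def)
  have "(\<Sum>e\<in>{e\<in>E. head X e = v}. (phi (d # ds) e :: 'r)) - (\<Sum>e\<in>{e\<in>E. tail X e = v}. phi (d # ds) e)
     = ((\<Sum>e\<in>{e\<in>E. head X e = v}. (chi d e :: 'r)) - (\<Sum>e\<in>{e\<in>E. tail X e = v}. chi d e))
       + ((\<Sum>e\<in>{e\<in>E. head X e = v}. (phi ds e :: 'r)) - (\<Sum>e\<in>{e\<in>E. tail X e = v}. phi ds e))"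
    unfolding spl by (rule add_diff_add)
  also have "\<dots> = ((if dend X d = v then 1 else 0) - (if dstart X d = v then 1 else 0))
     + ((if w = v then 1 else 0) - (if dend X d = v then 1 else 0))"
    unfolding ch IH ..
  also have "\<dots> = (if w = v then 1 else 0) - (if u = v then 1 else 0)"
    using u by (cases "w = v"; cases "dend X d = v"; cases "dstart X d = v") simp_all
  finally show ?case .
qed

lemma walk_darts: "is_walk X u W w \<Longrightarrow> set W \<subseteq> darts X"
  by (induction W arbitrary: u) auto

lemma closed_walk_cs:
  assumes "is_walk X u W u"
  shows "(phi W :: 'f \<Rightarrow> 'r::comm_ring_1) \<in> cycle_space X"
proof (rule cs_intro)
  show "finite (fst ` set W)" by simp
  show "fst ` set W \<subseteq> arcs X"
  proof
    fix e assume "e \<in> fst ` set W"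
    then obtain d where "d \<in> set W" "e = fst d" by auto
    moreover have "set W \<subseteq> darts X" using assms walk_darts by metis
    ultimately show "e \<in> arcs X" by (auto simp: darts_def)
  qed
  show "{e. (phi W e :: 'r) \<noteq> 0} \<subseteq> fst ` set W"
  proof (rule subsetI)
    fix e assume "e \<in> {e. (phi W e :: 'r) \<noteq> 0}"
    then have "(phi W e :: 'r) \<noteq> 0" by simp
    then show "e \<in> fst ` set W" by (rule phi_supp)
  qed
  show "\<forall>v\<in>verts X. (\<Sum>e\<in>{e \<in> fst ` set W. head X e = v}. (phi W e :: 'r)) = (\<Sum>e\<in>{e \<in> fst ` set W. tail X e = v}. phi W e)"
  proof
    fix v
    have "(\<Sum>e\<in>{e \<in> fst ` set W. head X e = v}. (phi W e :: 'r)) - (\<Sum>e\<in>{e \<in> fst ` set W. tail X e = v}. phi W e) = 0"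
    proof -
      have f: "finite (fst ` set W)" by simp
      show ?thesis using walk_flow[OF f assms order_refl, of v] by simp
    qed
    then show "(\<Sum>e\<in>{e \<in> fst ` set W. head X e = v}. (phi W e :: 'r)) = (\<Sum>e\<in>{e \<in> fst ` set W. tail X e = v}. phi W e)"
      by (simp only: right_minus_eq)
  qed
qed

section \<open>Cycle vectors vs phi\<close>

lemma phi_at: "distinct (map fst C) \<Longrightarrow> d \<in> set C \<Longrightarrow> phi C (fst d) = (if snd d then 1 else -1)"
proof (induction C)
  case Nil then show ?case by simp
next
  case (Cons d' ds)
  show ?case
  proof (cases "d = d'")
    case True
    then have "phi ds (fst d) = 0" using Cons.prems phi_supp by fastforce
    then show ?thesis using True by (simp add: chi_def)
  next
    case False
    then have "d \<in> set ds" using Cons.prems by simp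
    then have "fst d \<noteq> fst d'" using Cons.prems by (force simp: image_iff)
    then show ?thesis using Cons False by (simp add: chi_def)
  qed
qed

lemma find_at: "distinct (map fst C) \<Longrightarrow> d \<in> set C \<Longrightarrow> find (\<lambda>d'. fst d' = fst d) C = Some d"
  by (induction C) auto

lemma find_none: "e \<notin> fst ` set C \<Longrightarrow> find (\<lambda>d'. fst d' = e) C = None"
  by (induction C) auto

lemma cv_supp: "cycle_vector X C e \<noteq> 0 \<Longrightarrow> e \<in> fst ` set C"
proof (rule ccontr)
  assume "cycle_vector X C e \<noteq> 0" "e \<notin> fst ` set C"
  then show False using find_none[of e C] by (simp add: cycle_vector_def)
qed

lemma cv_at: "distinct (map fst C) \<Longrightarrow> d \<in> set C \<Longrightarrow>
   cycle_vector X C (fst d) = (if tail X (fst d) = dstart X d \<and> head X (fst d) = dend X d then 1 else -1)"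
  by (simp add: cycle_vector_def find_at)

lemma cycle_noloop:
  assumes "once_around_cycle X y C" "2 \<le> length C" "d \<in> set C"
  shows "dstart X d \<noteq> dend X d"
proof
  assume loop: "dstart X d = dend X d"
  obtain as bs where C: "C = as @ d # bs" using assms(3) by (meson split_list)
  have dist: "distinct (map (dstart X) as @ dstart X d # map (dstart X) bs)"
    using assms(1) C by (simp add: once_around_cycle_def)
  have w: "is_walk X y (as @ d # bs) y" using assms(1) C by (simp add: once_around_cycle_def)
  then obtain m where m1: "is_walk X y as m" and m2: "is_walk X m (d # bs) y"
    by (auto simp: is_walk_append)
  have n1: "dstart X d \<notin> set (map (dstart X) as)" and n2: "dstart X d \<notin> set (map (dstart X) bs)"
    using dist by auto
  show False
  proof (cases bs)
    case Nil
    then have e: "dend X d = y" using m2 by simp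
    have "as \<noteq> []" using assms(2) C Nil by auto
    then obtain a as' where a: "as = a # as'" by (cases as) auto
    then have "dstart X a = y" using m1 by simp
    then show False using n1 a e loop by simp
  next
    case (Cons b bs')
    then have "dstart X b = dend X d" using m2 by simp
    then show False using n2 loop Cons by simp
  qed
qed

lemma cv_phi:
  assumes "once_around_cycle X y C"
  shows "(cycle_vector X C :: 'f \<Rightarrow> 'r::comm_ring_1) = phi C \<or> (cycle_vector X C :: 'f \<Rightarrow> 'r) = (\<lambda>e. - phi C e)"
proof -
  have dist: "distinct (map fst C)" using assms by (simp add: once_around_cycle_def)
  have out: "e \<notin> fst ` set C \<Longrightarrow> (cycle_vector X C e :: 'r) = 0 \<and> (phi C e :: 'r) = 0" for e
  proof -
    assume n: "e \<notin> fst ` set C"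
    have 1: "(cycle_vector X C e :: 'r) = 0"
    proof (rule ccontr)
      assume "(cycle_vector X C e :: 'r) \<noteq> 0"
      then have "e \<in> fst ` set C" by (rule cv_supp)
      then show False using n by simp
    qed
    have 2: "(phi C e :: 'r) = 0"
    proof (rule ccontr)
      assume "(phi C e :: 'r) \<noteq> 0"
      then have "e \<in> fst ` set C" by (rule phi_supp)
      then show False using n by simp
    qed
    show ?thesis using 1 2 by simp
  qed
  show ?thesis
  proof (cases "2 \<le> length C")
    case True
    have "(cycle_vector X C e :: 'r) = phi C e" for e
    proof (cases "e \<in> fst ` set C")
      case True
      then obtain d where d: "d \<in> set C" "e = fst d" by auto
      have nl: "dstart X d \<noteq> dend X d" using cycle_noloop[OF assms \<open>2 \<le> length C\<close> d(1)] .
      have c0: "(cycle_vector X C (fst d) :: 'r) = (if tail X (fst d) = dstart X d \<and> head X (fst d) = dend X d then 1 else -1)"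
        by (rule cv_at[OF dist d(1)])
      have c: "(cycle_vector X C (fst d) :: 'r) = (if snd d then 1 else -1)"
        using c0 nl by (cases "snd d") (auto simp: dstart_def dend_def)
      have p: "(phi C (fst d) :: 'r) = (if snd d then 1 else -1)"
        by (rule phi_at[OF dist d(1)])
      show ?thesis using c p d by simp
    next
      case False then show ?thesis using out by simp
    qed
    then show ?thesis by auto
  next
    case False
    moreover have "C \<noteq> []" using assms by (simp add: once_around_cycle_def)
    then have "0 < length C" by simp
    then have "length C = 1" using False by linarith
    then obtain d where C: "C = [d]" by (cases C) auto
    have o: "e \<noteq> fst d \<Longrightarrow> (cycle_vector X C e :: 'r) = 0 \<and> (phi C e :: 'r) = 0" for e
      using out C by auto
    obtain a :: 'r where a: "cycle_vector X C = (\<lambda>e. if e = fst d then a else 0)" "a = 1 \<or> a = -1"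
    proof -
      have c: "(cycle_vector X C (fst d) :: 'r) = (if tail X (fst d) = dstart X d \<and> head X (fst d) = dend X d then 1 else -1)"
        by (rule cv_at[OF dist]) (simp add: C)
      show ?thesis using c o by (intro that[of "cycle_vector X C (fst d)"]) (auto simp: fun_eq_iff)
    qed
    obtain b :: 'r where b: "phi C = (\<lambda>e. if e = fst d then b else 0)" "b = 1 \<or> b = -1"
    proof -
      have p: "(phi C (fst d) :: 'r) = (if snd d then 1 else -1)"
        by (rule phi_at[OF dist]) (simp add: C)
      show ?thesis using p o by (intro that[of "phi C (fst d)"]) (auto simp: fun_eq_iff)
    qed
    have "a = b \<or> a = - b" using a(2) b(2) by auto
    then show ?thesis
    proof
      assume ab: "a = b" have "(cycle_vector X C :: 'f \<Rightarrow> 'r) = phi C" using [[show_types]] unfolding a(1) b(1) ab by (rule refl)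
      then show ?thesis by simp
    next
      assume "a = - b" then have "(cycle_vector X C :: 'f \<Rightarrow> 'r) = (\<lambda>e. - phi C e)"
        by (simp add: a(1) b(1) fun_eq_iff)
      then show ?thesis by simp
    qed
  qed
qed

lemma cv_cs:
  assumes "once_around_cycle X y C"
  shows "(cycle_vector X C :: 'f \<Rightarrow> 'r::comm_ring_1) \<in> cycle_space X"
proof -
  have "(phi C :: 'f \<Rightarrow> 'r) \<in> cycle_space X" using assms closed_walk_cs by (auto simp: once_around_cycle_def)
  from cv_phi[OF assms] show ?thesis
  proof
    assume "(cycle_vector X C :: 'f \<Rightarrow> 'r) = phi C" then show ?thesis using \<open>phi C \<in> cycle_space X\<close> by simp
  next
    assume "(cycle_vector X C :: 'f \<Rightarrow> 'r) = (\<lambda>e. - phi C e)"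
    then show ?thesis using cs_neg[OF \<open>phi C \<in> cycle_space X\<close>] by simp
  qed
qed

lemma phi_gen:
  assumes "once_around_cycle X y C" "cycle_vector X C \<in> S"
  shows "(phi C :: 'f \<Rightarrow> 'r::comm_ring_1) \<in> gen_submodule S"
proof -
  have b: "(cycle_vector X C :: 'f \<Rightarrow> 'r) \<in> gen_submodule S" using gen_base assms(2) .
  from cv_phi[OF assms(1)] show ?thesis
  proof
    assume "(cycle_vector X C :: 'f \<Rightarrow> 'r) = phi C" then show ?thesis using b by simp
  next
    assume "(cycle_vector X C :: 'f \<Rightarrow> 'r) = (\<lambda>e. - phi C e)"
    then have "(\<lambda>e. (-1) * (cycle_vector X C e :: 'r)) = phi C" by (simp add: fun_eq_iff)
    then show ?thesis using gen_smult[OF b, of "-1"] by simp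
  qed
qed

lemma cv_gen:
  assumes "once_around_cycle X y C" "(phi C :: 'f \<Rightarrow> 'r::comm_ring_1) \<in> gen_submodule S"
  shows "(cycle_vector X C :: 'f \<Rightarrow> 'r) \<in> gen_submodule S"
proof -
  from cv_phi[OF assms(1)] show ?thesis
  proof
    assume "(cycle_vector X C :: 'f \<Rightarrow> 'r) = phi C" then show ?thesis using assms by simp
  next
    assume "(cycle_vector X C :: 'f \<Rightarrow> 'r) = (\<lambda>e. - phi C e)"
    then show ?thesis using gen_smult[OF assms(2), of "-1"] by simp
  qed
qed


definition appl :: "('v,'e) pre_digraph \<Rightarrow> ('w,'f) pre_digraph \<Rightarrow> ('w \<Rightarrow> 'v) \<Rightarrow> 'e dart \<Rightarrow> 'w \<Rightarrow> bool" where
  "appl G H pV d y \<longleftrightarrow> y \<in> verts H \<and> d \<in> darts G \<and> dstart G d = pV y"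

definition lft :: "('w,'f) pre_digraph \<Rightarrow> ('f dart \<Rightarrow> 'e dart) \<Rightarrow> 'e dart \<Rightarrow> 'w \<Rightarrow> 'f dart" where
  "lft H pD d y = (THE d'. d' \<in> darts H \<and> dstart H d' = y \<and> pD d' = d)"

definition mvd :: "('v,'e) pre_digraph \<Rightarrow> ('w,'f) pre_digraph \<Rightarrow> ('w \<Rightarrow> 'v) \<Rightarrow> ('f dart \<Rightarrow> 'e dart) \<Rightarrow> 'e dart \<Rightarrow> 'w \<Rightarrow> 'f dart option" where
  "mvd G H pV pD d y = (if appl G H pV d y then Some (lft H pD d y)
      else if appl G H pV (drev d) y then Some (lft H pD (drev d) y) else None)"

definition vstep :: "('v,'e) pre_digraph \<Rightarrow> ('w,'f) pre_digraph \<Rightarrow> ('w \<Rightarrow> 'v) \<Rightarrow> ('f dart \<Rightarrow> 'e dart) \<Rightarrow> 'e dart \<Rightarrow> 'w \<Rightarrow> 'w" where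
  "vstep G H pV pD d y = (case mvd G H pV pD d y of None \<Rightarrow> y | Some l \<Rightarrow> dend H l)"

definition cstep :: "('v,'e) pre_digraph \<Rightarrow> ('w,'f) pre_digraph \<Rightarrow> ('w \<Rightarrow> 'v) \<Rightarrow> ('f dart \<Rightarrow> 'e dart) \<Rightarrow> 'e dart \<Rightarrow> 'w \<Rightarrow> 'f \<Rightarrow> 'r::comm_ring_1" where
  "cstep G H pV pD d y = (case mvd G H pV pD d y of None \<Rightarrow> 0 | Some l \<Rightarrow> chi l)"

primrec vf :: "('v,'e) pre_digraph \<Rightarrow> ('w,'f) pre_digraph \<Rightarrow> ('w \<Rightarrow> 'v) \<Rightarrow> ('f dart \<Rightarrow> 'e dart) \<Rightarrow> 'e dart list \<Rightarrow> 'w \<Rightarrow> 'w" where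
  "vf G H pV pD [] y = y"
| "vf G H pV pD (d # ds) y = vf G H pV pD ds (vstep G H pV pD d y)"

primrec cf :: "('v,'e) pre_digraph \<Rightarrow> ('w,'f) pre_digraph \<Rightarrow> ('w \<Rightarrow> 'v) \<Rightarrow> ('f dart \<Rightarrow> 'e dart) \<Rightarrow> 'e dart list \<Rightarrow> 'w \<Rightarrow> 'f \<Rightarrow> 'r::comm_ring_1" where
  "cf G H pV pD [] y = 0"
| "cf G H pV pD (d # ds) y = cstep G H pV pD d y + cf G H pV pD ds (vstep G H pV pD d y)"

lemma vf_append[simp]: "vf G H pV pD (xs @ ys) y = vf G H pV pD ys (vf G H pV pD xs y)"
  by (induction xs arbitrary: y) auto

lemma cf_append: "(cf G H pV pD (xs @ ys) y :: 'f \<Rightarrow> 'r::comm_ring_1) = cf G H pV pD xs y + cf G H pV pD ys (vf G H pV pD xs y)"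
  by (induction xs arbitrary: y) (auto simp: add.assoc)

locale cov =
  fixes G :: "('v,'e) pre_digraph" and H :: "('w,'f) pre_digraph"
    and pV :: "'w \<Rightarrow> 'v" and pD :: "'f dart \<Rightarrow> 'e dart"
  assumes wfH: "wf_digraph H" and covH: "graph_covering H G pV pD"
begin

lemma cov_dart: "d \<in> darts H \<Longrightarrow> pD d \<in> darts G \<and> dstart G (pD d) = pV (dstart H d) \<and> pD (drev d) = drev (pD d)"
  using covH by (simp add: graph_covering_def)

lemma cov_bij: "y \<in> verts H \<Longrightarrow> bij_betw pD {d\<in>darts H. dstart H d = y} {d\<in>darts G. dstart G d = pV y}"
  using covH by (simp add: graph_covering_def)

lemma pV_verts: "y \<in> verts H \<Longrightarrow> pV y \<in> verts G"
  using covH by (auto simp: graph_covering_def)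

lemma dart_verts: "d \<in> darts H \<Longrightarrow> dstart H d \<in> verts H \<and> dend H d \<in> verts H"
  using wfH by (auto simp: darts_def dstart_def dend_def wf_digraph_def)

lemma pV_dend: "d \<in> darts H \<Longrightarrow> dend G (pD d) = pV (dend H d)"
proof -
  assume d: "d \<in> darts H"
  then have "drev d \<in> darts H" by simp
  from cov_dart[OF this] have "dstart G (pD (drev d)) = pV (dstart H (drev d))" by simp
  moreover have "pD (drev d) = drev (pD d)" using cov_dart[OF d] by simp
  ultimately show ?thesis by simp
qed

lemma lft_ex:
  assumes "appl G H pV d y"
  shows "lft H pD d y \<in> darts H \<and> dstart H (lft H pD d y) = y \<and> pD (lft H pD d y) = d"
proof -
  have y: "y \<in> verts H" using assms by (simp add: appl_def)
  have b: "bij_betw pD {d\<in>darts H. dstart H d = y} {d\<in>darts G. dstart G d = pV y}" using cov_bij[OF y] .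
  have "d \<in> {d\<in>darts G. dstart G d = pV y}" using assms by (simp add: appl_def)
  then have "d \<in> pD ` {d\<in>darts H. dstart H d = y}" using b by (simp add: bij_betw_def)
  then obtain d' where d': "d' \<in> darts H" "dstart H d' = y" "pD d' = d" by auto
  have inj: "inj_on pD {d\<in>darts H. dstart H d = y}" using b by (simp add: bij_betw_def)
  have u: "d'' = d'" if "d'' \<in> darts H \<and> dstart H d'' = y \<and> pD d'' = d" for d''
    using inj_onD[OF inj, of d'' d'] that d' by simp
  have "lft H pD d y = d'" unfolding lft_def
  proof (rule the_equality)
    show "d' \<in> darts H \<and> dstart H d' = y \<and> pD d' = d" using d' by simp
    fix x assume "x \<in> darts H \<and> dstart H x = y \<and> pD x = d"
    then show "x = d'" by (rule u)
  qed
  then show ?thesis using d' by simp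
qed

lemma lft_uniq:
  assumes "d' \<in> darts H" "dstart H d' = y"
  shows "lft H pD (pD d') y = d'"
proof -
  have y: "y \<in> verts H" using dart_verts[OF assms(1)] assms(2) by simp
  have a: "appl G H pV (pD d') y" using cov_dart[OF assms(1)] assms y by (simp add: appl_def)
  note l = lft_ex[OF a]
  have b: "bij_betw pD {d\<in>darts H. dstart H d = y} {d\<in>darts G. dstart G d = pV y}" using cov_bij[OF y] .
  have inj: "inj_on pD {d\<in>darts H. dstart H d = y}" using b by (simp add: bij_betw_def)
  show ?thesis using inj_onD[OF inj, of "lft H pD (pD d') y" d'] l assms by simp
qed

lemma mvd_Some:
  "mvd G H pV pD d y = Some l \<Longrightarrow> l \<in> darts H \<and> dstart H l = y \<and> (pD l = d \<or> pD l = drev d)"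
proof -
  assume m: "mvd G H pV pD d y = Some l"
  show ?thesis
  proof (cases "appl G H pV d y")
    case True
    then have "l = lft H pD d y" using m by (simp add: mvd_def)
    then show ?thesis using lft_ex[OF True] by simp
  next
    case False
    then have a: "appl G H pV (drev d) y" using m by (simp add: mvd_def split: if_splits)
    then have "l = lft H pD (drev d) y" using m False by (simp add: mvd_def)
    then show ?thesis using lft_ex[OF a] by simp
  qed
qed

lemma mvd_rev: "mvd G H pV pD (drev d) (vstep G H pV pD d y) = map_option drev (mvd G H pV pD d y)"
proof (cases "appl G H pV d y")
  case True
  define l where "l = lft H pD d y"
  have l: "l \<in> darts H" "dstart H l = y" "pD l = d" using lft_ex[OF True] by (auto simp: l_def)
  have m: "mvd G H pV pD d y = Some l" using True by (simp add: mvd_def l_def)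
  have vs: "vstep G H pV pD d y = dend H l" by (simp add: vstep_def m)
  have dl: "drev l \<in> darts H" using l by simp
  have pdl: "pD (drev l) = drev d" using cov_dart[OF l(1)] l by simp
  have a2: "appl G H pV (drev d) (dend H l)"
    using dart_verts[OF l(1)] l True pV_dend[OF l(1)] by (auto simp: appl_def)
  have lf: "lft H pD (drev d) (dend H l) = drev l"
    using lft_uniq[OF dl, of "dend H l"] pdl by simp
  have m2: "mvd G H pV pD (drev d) (dend H l) = Some (drev l)"
    unfolding mvd_def using a2 lf by simp
  show ?thesis unfolding vs m m2 by simp
next
  case False
  note F = False
  show ?thesis
  proof (cases "appl G H pV (drev d) y")
    case True
    define l where "l = lft H pD (drev d) y"
    have l: "l \<in> darts H" "dstart H l = y" "pD l = drev d" using lft_ex[OF True] by (auto simp: l_def)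
    have m: "mvd G H pV pD d y = Some l" using True F by (simp add: mvd_def l_def)
    have vs: "vstep G H pV pD d y = dend H l" by (simp add: vstep_def m)
    have dl: "drev l \<in> darts H" using l by simp
    have pdl: "pD (drev l) = d" using cov_dart[OF l(1)] l by simp
    have yv: "y \<in> verts H" "d \<in> darts G" using True by (auto simp: appl_def)
    have pvy: "pV y = dend G d" using True by (simp add: appl_def)
    have pvz: "pV (dend H l) = dstart G d" using pV_dend[OF l(1)] l by simp
    have na: "\<not> appl G H pV (drev d) (dend H l)"
    proof
      assume "appl G H pV (drev d) (dend H l)"
      then have "dend G d = dstart G d" using pvz by (simp add: appl_def)
      then have "appl G H pV d y" using yv pvy by (simp add: appl_def)
      then show False using F by simp
    qed
    have a2: "appl G H pV d (dend H l)"
      using dart_verts[OF l(1)] yv pvz by (auto simp: appl_def)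
    have lf: "lft H pD d (dend H l) = drev l"
      using lft_uniq[OF dl, of "dend H l"] pdl by simp
    have m2: "mvd G H pV pD (drev d) (dend H l) = Some (drev l)"
      unfolding mvd_def using a2 na lf by simp
    show ?thesis unfolding vs m m2 by simp
  next
    case False
    then have m: "mvd G H pV pD d y = None" using F by (simp add: mvd_def)
    have vs: "vstep G H pV pD d y = y" using m by (simp add: vstep_def)
    have m2: "mvd G H pV pD (drev d) y = None"
      unfolding mvd_def using F False by simp
    show ?thesis unfolding vs m m2 by simp
  qed
qed

lemma vstep_inv: "vstep G H pV pD (drev d) (vstep G H pV pD d y) = y"
proof (cases "mvd G H pV pD d y")
  case None
  then show ?thesis using mvd_rev[of d y] by (simp add: vstep_def)
next
  case (Some l)
  then have "dstart H l = y" using mvd_Some[of d y l] by simp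
  then show ?thesis using mvd_rev[of d y] Some by (simp add: vstep_def)
qed

lemma cstep_inv: "(cstep G H pV pD d y :: 'f \<Rightarrow> 'r::comm_ring_1) + cstep G H pV pD (drev d) (vstep G H pV pD d y) = 0"
proof (cases "mvd G H pV pD d y")
  case None
  then show ?thesis using mvd_rev[of d y] by (simp add: cstep_def)
next
  case (Some l)
  then show ?thesis using mvd_rev[of d y] Some by (simp add: cstep_def chi_drev)
qed

lemma red_inv:
  assumes "(a, b) \<in> backtrack_red"
  shows "vf G H pV pD a y = vf G H pV pD b y \<and> (cf G H pV pD a y :: 'f \<Rightarrow> 'r::comm_ring_1) = cf G H pV pD b y"
proof -
  obtain as bs d where ab: "a = as @ [d, drev d] @ bs" "b = as @ bs"
    using assms by (auto simp: backtrack_red_def)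
  define z where "z = vf G H pV pD as y"
  have v: "vf G H pV pD [d, drev d] z = z" using vstep_inv by simp
  have c: "(cf G H pV pD [d, drev d] z :: 'f \<Rightarrow> 'r) = 0"
    using cstep_inv[of d z] by (simp add: add.assoc)
  show ?thesis unfolding ab
    using v c by (simp add: cf_append z_def[symmetric])
qed

lemma hom_inv:
  assumes "homotopic W W'"
  shows "vf G H pV pD W y = vf G H pV pD W' y \<and> (cf G H pV pD W y :: 'f \<Rightarrow> 'r::comm_ring_1) = cf G H pV pD W' y"
proof -
  have "(W, W') \<in> (backtrack_red \<union> backtrack_red\<inverse>)\<^sup>*" using assms by (simp add: homotopic_def)
  then show ?thesis
  proof (induction arbitrary: y rule: rtrancl_induct)
    case base then show ?case by simp
  next
    case (step b c)
    have "vf G H pV pD b y = vf G H pV pD c y \<and> (cf G H pV pD b y :: 'f \<Rightarrow> 'r) = cf G H pV pD c y"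
      using step.hyps(2)
    proof
      assume "(b, c) \<in> backtrack_red" then show ?thesis by (rule red_inv)
    next
      assume "(b, c) \<in> backtrack_red\<inverse>" then have "(c, b) \<in> backtrack_red" by simp
      then have "vf G H pV pD c y = vf G H pV pD b y \<and> (cf G H pV pD c y :: 'f \<Rightarrow> 'r) = cf G H pV pD b y"
        by (rule red_inv)
      then show ?thesis by simp
    qed
    moreover have "vf G H pV pD W y = vf G H pV pD b y \<and> (cf G H pV pD W y :: 'f \<Rightarrow> 'r) = cf G H pV pD b y"
      by (rule step.IH)
    ultimately show ?case by simp
  qed
qed

lemma vf_rev: "vf G H pV pD (rev_walk X) (vf G H pV pD X y) = y"
  by (induction X arbitrary: y) (auto simp: vstep_inv)

lemma vf_inj: "vf G H pV pD R a = vf G H pV pD R b \<Longrightarrow> a = b"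
proof -
  assume "vf G H pV pD R a = vf G H pV pD R b"
  then have "vf G H pV pD (rev_walk R) (vf G H pV pD R a) = vf G H pV pD (rev_walk R) (vf G H pV pD R b)" by simp
  then show "a = b" by (simp only: vf_rev)
qed

lemma lift_proj:
  "is_walk H y A z \<Longrightarrow> vf G H pV pD (map pD A) y = z \<and> (cf G H pV pD (map pD A) y :: 'f \<Rightarrow> 'r::comm_ring_1) = phi A"
proof (induction A arbitrary: y)
  case Nil then show ?case by simp
next
  case (Cons d ds)
  have d: "d \<in> darts H" "dstart H d = y" "y \<in> verts H" using Cons.prems by auto
  have a: "appl G H pV (pD d) y" using cov_dart[OF d(1)] d by (simp add: appl_def)
  have m: "mvd G H pV pD (pD d) y = Some d" using a lft_uniq[OF d(1,2)] by (simp add: mvd_def)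
  have vs: "vstep G H pV pD (pD d) y = dend H d" by (simp add: vstep_def m)
  have cs: "(cstep G H pV pD (pD d) y :: 'f \<Rightarrow> 'r) = chi d" by (simp add: cstep_def m)
  have "is_walk H (dend H d) ds z" using Cons.prems by simp
  from Cons.IH[OF this] show ?case using vs cs by simp
qed

lemma proj_walk: "is_walk H a A b \<Longrightarrow> is_walk G (pV a) (map pD A) (pV b)"
proof (induction A arbitrary: a)
  case Nil then show ?case using pV_verts by auto
next
  case (Cons d ds)
  have d: "d \<in> darts H" "dstart H d = a" "a \<in> verts H" using Cons.prems by auto
  have "is_walk G (pV (dend H d)) (map pD ds) (pV b)" using Cons by simp
  then show ?case using cov_dart[OF d(1)] d pV_verts[OF d(3)] pV_dend[OF d(1)] by simp
qed

lemma lift_walk: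
  "y \<in> verts H \<Longrightarrow> is_walk G (pV y) B x \<Longrightarrow> \<exists>B' z. is_walk H y B' z \<and> map pD B' = B \<and> pV z = x"
proof (induction B arbitrary: y)
  case Nil then show ?case by (intro exI[of _ "[]"] exI[of _ y]) simp
next
  case (Cons d ds)
  have a: "appl G H pV d y" using Cons.prems by (simp add: appl_def)
  define l where "l = lft H pD d y"
  have l: "l \<in> darts H" "dstart H l = y" "pD l = d" using lft_ex[OF a] by (auto simp: l_def)
  have e: "pV (dend H l) = dend G d" using pV_dend[OF l(1)] l by simp
  have "is_walk G (pV (dend H l)) ds x" using Cons.prems e by simp
  from Cons.IH[OF _ this] dart_verts[OF l(1)] obtain B' z where
    B': "is_walk H (dend H l) B' z" "map pD B' = ds" "pV z = x" by auto
  show ?case using B' l Cons.prems by (intro exI[of _ "l # B'"] exI[of _ z]) simp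
qed

lemma map_rev: "set A \<subseteq> darts H \<Longrightarrow> map pD (rev_walk A) = rev_walk (map pD A)"
  by (induction A) (auto simp: cov_dart)

end


lemma homotopic_refl: "homotopic W W"
  by (simp add: homotopic_def)

locale rcov = cov G H pV pD
  for G :: "('v,'e) pre_digraph" and H :: "('w,'f) pre_digraph"
    and pV :: "'w \<Rightarrow> 'v" and pD :: "'f dart \<Rightarrow> 'e dart" +
  fixes r :: nat and x0 :: 'v and y0 :: 'w
  assumes connH: "connected_graph H" and y0: "y0 \<in> verts H" "pV y0 = x0"
    and rloc: "\<forall>W. is_walk G x0 W x0 \<longrightarrow>
        (W \<in> pi1r_walks G r x0 \<longleftrightarrow> (\<exists>W'. is_walk H y0 W' y0 \<and> homotopic (map pD W') W))"
begin

abbreviation Sr :: "('f \<Rightarrow> 'r::comm_ring_1) set" where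
  "Sr \<equiv> {cycle_vector H W | W y. once_around_cycle H y W \<and> length W \<le> r}"

lemma lift_v: "is_walk H y A z \<Longrightarrow> vf G H pV pD (map pD A) y = z"
  by (rule conjunct1[OF lift_proj])
lemma lift_c: "is_walk H y A z \<Longrightarrow> (cf G H pV pD (map pD A) y :: 'f \<Rightarrow> 'r::comm_ring_1) = phi A"
  by (rule conjunct2[OF lift_proj])
lemma hom_v: "homotopic W W' \<Longrightarrow> vf G H pV pD W y = vf G H pV pD W' y"
  by (rule conjunct1[OF hom_inv])
lemma hom_c: "homotopic W W' \<Longrightarrow> (cf G H pV pD W y :: 'f \<Rightarrow> 'r::comm_ring_1) = cf G H pV pD W' y"
  by (rule conjunct2[OF hom_inv])

lemma fst_pD: "d1 \<in> darts H \<Longrightarrow> fst d1 = fst d2 \<Longrightarrow> fst (pD d1) = fst (pD d2)"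
proof -
  assume d1: "d1 \<in> darts H" and e: "fst d1 = fst d2"
  have "d2 = d1 \<or> d2 = drev d1" using e by (cases d1; cases d2) (auto simp: drev_def)
  then show ?thesis using cov_dart[OF d1] by (auto simp: drev_def)
qed

lemma lift_cycle:
  assumes Qt: "is_walk H yt Qt yt" and Q: "once_around_cycle G yG Q" and m: "map pD Qt = Q"
  shows "once_around_cycle H yt Qt"
proof -
  have sd: "set Qt \<subseteq> darts H" using walk_darts[OF Qt] .
  have ne: "Qt \<noteq> []" using Q m by (auto simp: once_around_cycle_def)
  have "map (fst \<circ> pD) Qt = map fst Q" using m by auto
  then have d1: "distinct (map (fst \<circ> pD) Qt)" using Q by (simp add: once_around_cycle_def)
  then have dQ: "distinct Qt" and inj1: "inj_on (fst \<circ> pD) (set Qt)" by (auto simp: distinct_map)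
  have "inj_on fst (set Qt)"
  proof (rule inj_onI)
    fix x y assume xy: "x \<in> set Qt" "y \<in> set Qt" "fst x = fst y"
    have "x \<in> darts H" using xy(1) sd by auto
    then have "(fst \<circ> pD) x = (fst \<circ> pD) y" using fst_pD[of x y] xy(3) by simp
    then show "x = y" using inj_onD[OF inj1] xy by blast
  qed
  then have df: "distinct (map fst Qt)" using dQ by (simp add: distinct_map)
  have "map (dstart G) Q = map pV (map (dstart H) Qt)"
    using sd m[symmetric] cov_dart by auto
  then have "distinct (map pV (map (dstart H) Qt))" using Q by (simp add: once_around_cycle_def)
  then have ds: "distinct (map (dstart H) Qt)" by (auto simp: distinct_map intro: inj_on_imageI2)
  show ?thesis using ne Qt df ds by (simp add: once_around_cycle_def)
qed

lemma lasso_step: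
  assumes y: "y \<in> verts H" "pV y = x0" and L: "r_lasso G r x0 L"
  shows "vf G H pV pD L y = y \<and> (cf G H pV pD L y :: 'f \<Rightarrow> 'r::comm_ring_1) \<in> gen_submodule Sr"
proof -
  obtain W0 yG Q where W0: "is_walk G x0 W0 yG" and Q: "once_around_cycle G yG Q"
    and lQ: "length Q \<le> r" and Ldef: "L = W0 @ Q @ rev_walk W0"
    using L by (auto simp: r_lasso_def)
  obtain P where P: "is_walk H y0 P y" using connH y0 y by (auto simp: connected_graph_def)
  define B where "B = map pD P"
  have B: "is_walk G x0 B x0" using proj_walk[OF P] y0 y by (simp add: B_def)
  obtain Bt yt where Bt: "is_walk H y Bt yt" "map pD Bt = W0" "pV yt = yG"
    using lift_walk[OF y(1)] W0 y by force
  have Qw: "is_walk G yG Q yG" using Q by (simp add: once_around_cycle_def)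
  have yt: "yt \<in> verts H" using is_walk_end[OF Bt(1)] .
  obtain Qt q where Qt: "is_walk H yt Qt q" "map pD Qt = Q" "pV q = yG"
    using lift_walk[OF yt] Qw Bt(3) by force
  define L' where "L' = (B @ W0) @ Q @ rev_walk (B @ W0)"
  have BW: "is_walk G x0 (B @ W0) yG" using B W0 by (auto simp: is_walk_append)
  have lassoL': "r_lasso G r x0 L'" unfolding r_lasso_def L'_def using BW Q lQ by blast
  have wL': "is_walk G x0 L' x0" unfolding L'_def
    using BW Qw is_walk_rev[OF BW] by (auto simp: is_walk_append)
  have "L' \<in> pi1r_walks G r x0" unfolding pi1r_walks_def
    using wL' lassoL' by (auto intro!: exI[of _ "[L']"] simp: homotopic_refl)
  then obtain W'' where W'': "is_walk H y0 W'' y0" "homotopic (map pD W'') L'"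
    using rloc wL' by blast
  have "vf G H pV pD (map pD W'') y0 = vf G H pV pD L' y0"
    using hom_v[OF W''(2)] .
  then have vL': "vf G H pV pD L' y0 = y0" using lift_v[OF W''(1)] by simp
  have vB: "vf G H pV pD B y0 = y" using lift_v[OF P] by (simp add: B_def)
  have vW0: "vf G H pV pD W0 y = yt" using lift_v[OF Bt(1)] Bt(2) by simp
  have vQ: "vf G H pV pD Q yt = q" using lift_v[OF Qt(1)] Qt(2) by simp
  have vBW: "vf G H pV pD (B @ W0) y0 = yt" using vB vW0 by simp
  have "vf G H pV pD (rev_walk (B @ W0)) q = y0"
    using vL' vBW vQ unfolding L'_def by (simp del: rev_walk_append)
  moreover have "vf G H pV pD (rev_walk (B @ W0)) yt = y0"
    using vf_rev[of "B @ W0" y0] vBW by simp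
  ultimately have "vf G H pV pD (rev_walk (B @ W0)) q = vf G H pV pD (rev_walk (B @ W0)) yt" by simp
  then have qyt: "q = yt" by (rule vf_inj)
  have Qc: "once_around_cycle H yt Qt" using lift_cycle[OF _ Q Qt(2)] Qt(1) qyt by simp
  have lQt: "length Qt \<le> r" using lQ Qt(2) by auto
  have vL: "vf G H pV pD L y = y"
    using vW0 vQ qyt vf_rev[of W0 y] by (simp add: Ldef)
  have sBt: "set Bt \<subseteq> darts H" using walk_darts[OF Bt(1)] .
  have rW0: "rev_walk W0 = map pD (rev_walk Bt)" using map_rev[OF sBt] Bt(2) by simp
  have c1: "(cf G H pV pD W0 y :: 'f \<Rightarrow> 'r) = phi Bt" using lift_c[OF Bt(1)] Bt(2) by simp
  have c2: "(cf G H pV pD Q yt :: 'f \<Rightarrow> 'r) = phi Qt" using lift_c[OF Qt(1)] Qt(2) by simp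
  have c3: "(cf G H pV pD (rev_walk W0) yt :: 'f \<Rightarrow> 'r) = phi (rev_walk Bt)"
    using lift_c[OF is_walk_rev[OF Bt(1)]] rW0 by simp
  have "(cf G H pV pD L y :: 'f \<Rightarrow> 'r) = phi Bt + (phi Qt + phi (rev_walk Bt))"
    unfolding Ldef cf_append c1 vW0 c2 vQ qyt c3 by simp
  also have "\<dots> = phi Qt" by (simp add: phi_rev_walk)
  finally have cL: "(cf G H pV pD L y :: 'f \<Rightarrow> 'r) = phi Qt" .
  have "cycle_vector H Qt \<in> (Sr :: ('f \<Rightarrow> 'r) set)" using Qc lQt by blast
  then have "(phi Qt :: 'f \<Rightarrow> 'r) \<in> gen_submodule Sr" by (rule phi_gen[OF Qc])
  then show ?thesis using vL cL by simp
qed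

end


context rcov begin

lemma concat_step:
  "(\<forall>L\<in>set Ls. r_lasso G r x0 L) \<Longrightarrow> y \<in> verts H \<Longrightarrow> pV y = x0 \<Longrightarrow>
   vf G H pV pD (concat Ls) y = y \<and> (cf G H pV pD (concat Ls) y :: 'f \<Rightarrow> 'r::comm_ring_1) \<in> gen_submodule Sr"
proof (induction Ls)
  case Nil
  have "((\<lambda>_. 0) :: 'f \<Rightarrow> 'r) \<in> gen_submodule Sr" by (rule gen_submodule.zero)
  then show ?case by (simp add: zero_fun_def)
next
  case (Cons L Ls)
  have l: "vf G H pV pD L y = y" "(cf G H pV pD L y :: 'f \<Rightarrow> 'r) \<in> gen_submodule Sr"
    using lasso_step[OF Cons.prems(2,3)] Cons.prems(1) by auto
  have ih: "vf G H pV pD (concat Ls) y = y" "(cf G H pV pD (concat Ls) y :: 'f \<Rightarrow> 'r) \<in> gen_submodule Sr"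
    using Cons by auto
  have "(cf G H pV pD (concat (L # Ls)) y :: 'f \<Rightarrow> 'r) = (\<lambda>e. cf G H pV pD L y e + cf G H pV pD (concat Ls) y e)"
    using l(1) by (simp add: cf_append fun_eq_iff)
  then show ?case using gen_add[OF l(2) ih(2)] l(1) ih(1) by simp
qed

lemma cycle_in_Zr:
  assumes C: "once_around_cycle H yc C"
  shows "(cycle_vector H C :: 'f \<Rightarrow> 'r::comm_ring_1) \<in> gen_submodule Sr"
proof -
  have Cw: "is_walk H yc C yc" using C by (simp add: once_around_cycle_def)
  have yc: "yc \<in> verts H" using is_walk_start[OF Cw] .
  obtain P where P: "is_walk H y0 P yc" using connH y0 yc by (auto simp: connected_graph_def)
  define A where "A = P @ C @ rev_walk P"
  have Aw: "is_walk H y0 A y0" unfolding A_def using P Cw is_walk_rev[OF P] by (auto simp: is_walk_append)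
  have pA: "is_walk G x0 (map pD A) x0" using proj_walk[OF Aw] y0 by simp
  have "map pD A \<in> pi1r_walks G r x0" using rloc pA Aw homotopic_refl by blast
  then obtain Ls where Ls: "\<forall>L\<in>set Ls. r_lasso G r x0 L" "homotopic (map pD A) (concat Ls)"
    by (auto simp: pi1r_walks_def)
  have "(cf G H pV pD (map pD A) y0 :: 'f \<Rightarrow> 'r) = cf G H pV pD (concat Ls) y0" by (rule hom_c[OF Ls(2)])
  moreover have "(cf G H pV pD (concat Ls) y0 :: 'f \<Rightarrow> 'r) \<in> gen_submodule Sr"
    by (rule conjunct2[OF concat_step[OF Ls(1) y0]])
  moreover have "(cf G H pV pD (map pD A) y0 :: 'f \<Rightarrow> 'r) = phi A" by (rule lift_c[OF Aw])
  moreover have "(phi A :: 'f \<Rightarrow> 'r) = phi C" by (simp add: A_def phi_rev_walk)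
  ultimately have "(phi C :: 'f \<Rightarrow> 'r) \<in> gen_submodule Sr" by simp
  then show ?thesis by (rule cv_gen[OF C])
qed

end


lemma dart_ends: "fst d = fst d2 \<Longrightarrow> dstart X d = dstart X d2 \<or> dstart X d = dend X d2"
  by (cases "snd d"; cases "snd d2") (auto simp: dstart_def dend_def)

lemma dart_ends2: "v = tail X (fst d2) \<or> v = head X (fst d2) \<Longrightarrow> v = dstart X d2 \<or> v = dend X d2"
  by (cases "snd d2") (auto simp: dstart_def dend_def)

lemma path_edges_distinct:
  "is_walk X u P w \<Longrightarrow> distinct (map (dstart X) P @ [w]) \<Longrightarrow> distinct (map fst P)"
proof (induction P arbitrary: u)
  case Nil then show ?case by simp
next
  case (Cons d ds)
  have wds: "is_walk X (dend X d) ds w" using Cons.prems by simp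
  have dds: "distinct (map (dstart X) ds @ [w])" using Cons.prems by simp
  have nd: "dstart X d \<notin> set (map (dstart X) ds @ [w])" using Cons.prems by simp
  have "fst d \<notin> fst ` set ds"
  proof
    assume "fst d \<in> fst ` set ds"
    then obtain d2 where d2: "d2 \<in> set ds" "fst d2 = fst d" by auto
    have "dstart X d2 \<in> set (map (dstart X) ds @ [w]) \<and> dend X d2 \<in> set (map (dstart X) ds @ [w])"
      using walk_dend_in[OF wds d2(1)] by auto
    moreover have "dstart X d = dstart X d2 \<or> dstart X d = dend X d2" using dart_ends d2(2) by metis
    ultimately show False using nd by auto
  qed
  then show ?case using Cons.IH[OF wds dds] by simp
qed

lemma deg2:
  assumes wf: "wf_digraph X" and z: "z \<in> cycle_space X" and ze: "z e \<noteq> 0"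
    and nl: "tail X e \<noteq> head X e" and v: "v = tail X e \<or> v = head X e"
  shows "\<exists>e'. z e' \<noteq> 0 \<and> e' \<noteq> e \<and> (tail X e' = v \<or> head X e' = v)"
proof (rule ccontr)
  assume "\<not> ?thesis"
  then have no: "\<And>e'. z e' \<noteq> 0 \<Longrightarrow> e' \<noteq> e \<Longrightarrow> tail X e' \<noteq> v \<and> head X e' \<noteq> v" by blast
  have ea: "e \<in> arcs X" using z ze by (auto simp: cycle_space_def)
  have vv: "v \<in> verts X" using v wf ea by (auto simp: wf_digraph_def)
  have K: "(\<Sum>e\<in>{e\<in>arcs X. head X e = v \<and> z e \<noteq> 0}. z e) = (\<Sum>e\<in>{e\<in>arcs X. tail X e = v \<and> z e \<noteq> 0}. z e)"
    using z vv by (auto simp: cycle_space_def)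
  from v show False
  proof
    assume vt: "v = tail X e"
    have s1: "{e\<in>arcs X. head X e = v \<and> z e \<noteq> 0} = {}"
    proof (rule equals0I)
      fix x assume "x \<in> {e\<in>arcs X. head X e = v \<and> z e \<noteq> 0}"
      then have hx: "head X x = v" "z x \<noteq> 0" by auto
      show False
      proof (cases "x = e")
        case True then show False using hx vt nl by simp
      next
        case False then show False using no[OF hx(2) False] hx by simp
      qed
    qed
    have s2: "{e'\<in>arcs X. tail X e' = v \<and> z e' \<noteq> 0} = {e}" using no vt ea ze by auto
    show False using K ze unfolding s1 s2 by simp
  next
    assume vh: "v = head X e"
    have s1: "{e'\<in>arcs X. head X e' = v \<and> z e' \<noteq> 0} = {e}" using no vh ea ze by auto
    have s2: "{e\<in>arcs X. tail X e = v \<and> z e \<noteq> 0} = {}"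
    proof (rule equals0I)
      fix x assume "x \<in> {e\<in>arcs X. tail X e = v \<and> z e \<noteq> 0}"
      then have hx: "tail X x = v" "z x \<noteq> 0" by auto
      show False
      proof (cases "x = e")
        case True then show False using hx vh nl by simp
      next
        case False then show False using no[OF hx(2) False] hx by simp
      qed
    qed
    show False using K ze unfolding s1 s2 by simp
  qed
qed

lemma find_cycle:
  assumes wf: "wf_digraph X" and z: "z \<in> cycle_space X" and ne: "{e. z e \<noteq> 0} \<noteq> {}"
  shows "\<exists>C y. once_around_cycle X y C \<and> fst ` set C \<subseteq> {e. z e \<noteq> 0}"
proof -
  define S where "S = {e. z e \<noteq> 0}"
  have SA: "S \<subseteq> arcs X" and fS: "finite S" using z by (auto simp: cycle_space_def S_def)
  have inV: "tail X e \<in> verts X \<and> head X e \<in> verts X" if "e \<in> S" for e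
    using wf SA that by (auto simp: wf_digraph_def)
  show ?thesis
  proof (cases "\<exists>e\<in>S. tail X e = head X e")
    case True
    then obtain e where e: "e \<in> S" "tail X e = head X e" by blast
    have "once_around_cycle X (tail X e) [(e, True)]"
      using e inV[OF e(1)] SA by (auto simp: once_around_cycle_def darts_def dstart_def dend_def)
    then show ?thesis using e S_def by auto
  next
    case False
    then have nl: "\<And>e. e \<in> S \<Longrightarrow> tail X e \<noteq> head X e" by blast
    define T where "T = tail X ` S \<union> head X ` S"
    have fT: "finite T" using fS by (simp add: T_def)
    define pth where "pth P \<longleftrightarrow> P \<noteq> [] \<and> (\<exists>u w. is_walk X u P w \<and> fst ` set P \<subseteq> S \<and> distinct (map (dstart X) P @ [w]))" for P
    obtain e0 where e0: "e0 \<in> S" using ne S_def by auto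
    have p0: "pth [(e0, True)]" unfolding pth_def
      using e0 inV[OF e0] SA nl[OF e0] by (auto simp: darts_def dstart_def dend_def intro!: exI[of _ "tail X e0"])
    have bound: "length P < card T" if pP0: "pth P" for P
    proof -
      obtain u w where w: "is_walk X u P w" "fst ` set P \<subseteq> S" "distinct (map (dstart X) P @ [w])"
        and Pne: "P \<noteq> []" using pP0 unfolding pth_def by blast
      have "set (map (dstart X) P @ [w]) \<subseteq> T"
      proof
        fix x assume "x \<in> set (map (dstart X) P @ [w])"
        then have "x \<in> dstart X ` set P \<or> x = w" by auto
        moreover have "w = dend X (last P)" using walk_last[OF w(1) Pne] by simp
        moreover have "last P \<in> set P" using Pne by simp
        ultimately obtain d where "d \<in> set P" "x = dstart X d \<or> x = dend X d" by blast
        moreover then have "fst d \<in> S" using w(2) by auto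
        ultimately show "x \<in> T" by (auto simp: T_def dstart_def dend_def)
      qed
      then have "card (set (map (dstart X) P @ [w])) \<le> card T" using fT by (rule card_mono[rotated])
      moreover have "card (set (map (dstart X) P @ [w])) = length P + 1"
        using distinct_card[OF w(3)] by simp
      ultimately show ?thesis by simp
    qed
    obtain P where pP: "pth P" and maxP: "\<And>P'. pth P' \<Longrightarrow> length P' \<le> length P"
      using ex_has_greatest_nat[of pth "[(e0, True)]" length "card T"] p0 bound by blast
    obtain u w where w: "is_walk X u P w" "fst ` set P \<subseteq> S" "distinct (map (dstart X) P @ [w])"
      and Pne: "P \<noteq> []" using pP unfolding pth_def by blast
    define dl where "dl = last P"
    have dlP: "dl \<in> set P" using Pne by (simp add: dl_def)
    have dlw: "dend X dl = w" using walk_last[OF w(1) Pne] by (simp add: dl_def)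
    have fdl: "fst dl \<in> S" using dlP w(2) by auto
    have "w = tail X (fst dl) \<or> w = head X (fst dl)" using dlw by (auto simp: dend_def)
    then obtain e' where e': "z e' \<noteq> 0" "e' \<noteq> fst dl" "tail X e' = w \<or> head X e' = w"
      using deg2[OF wf z _ nl[OF fdl]] fdl S_def by blast
    have e'S: "e' \<in> S" using e'(1) by (simp add: S_def)
    define d' where "d' = (e', tail X e' = w)"
    have d's: "dstart X d' = w" using e'(3) by (auto simp: d'_def dstart_def)
    have d'D: "d' \<in> darts X" using e'S SA by (auto simp: d'_def darts_def)
    have d'nl: "dend X d' \<noteq> w" using nl[OF e'S] e'(3) by (auto simp: d'_def dend_def)
    have d'v: "dend X d' \<in> verts X" using inV[OF e'S] by (auto simp: d'_def dend_def)
    have wv: "w \<in> verts X" using is_walk_end[OF w(1)] .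
    have wd': "is_walk X w [d'] (dend X d')" using d's d'D d'v wv by simp
    have nw: "w \<notin> set (map (dstart X) P)" using w(3) by simp
    show ?thesis
    proof (cases "dend X d' \<in> set (map (dstart X) P)")
      case False
      have "pth (P @ [d'])" unfolding pth_def
        using w wd' False d'nl e'S nw by (auto simp: is_walk_append d'_def)
      then have "length (P @ [d']) \<le> length P" by (rule maxP)
      then show ?thesis by simp
    next
      case True
      then obtain i where i: "i < length P" "dstart X (P ! i) = dend X d'"
        by (auto simp: in_set_conv_nth)
      define C where "C = drop i P @ [d']"
      have dropc: "drop i P = P ! i # drop (Suc i) P" using i(1) by (simp add: Cons_nth_drop_Suc)
      obtain m where m: "is_walk X u (take i P) m" "is_walk X m (drop i P) w"
        using w(1) is_walk_append[of X u "take i P" "drop i P" w] by auto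
      have "m = dend X d'" using m(2) i(2) dropc by simp
      then have Cw: "is_walk X (dend X d') C (dend X d')"
        using m(2) wd' by (auto simp: C_def is_walk_append)
      have "distinct (drop i (map (dstart X) P @ [w]))" by (rule distinct_drop[OF w(3)])
      moreover have "drop i (map (dstart X) P @ [w]) = map (dstart X) C"
        using i(1) d's by (simp add: C_def drop_map)
      ultimately have dC: "distinct (map (dstart X) C)" by (simp only:)
      have dfP: "distinct (map fst P)" using path_edges_distinct[OF w(1,3)] .
      have e'P: "e' \<notin> fst ` set P"
      proof
        assume "e' \<in> fst ` set P"
        then obtain d2 where d2: "d2 \<in> set P" "fst d2 = e'" by auto
        have "d2 \<noteq> dl" using d2 e'(2) by auto
        have Pb: "P = butlast P @ [dl]" using Pne by (simp add: dl_def)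
        have sP0: "set P = set (butlast P @ [dl])" by (rule arg_cong[of P "butlast P @ [dl]" set, OF Pb])
        have sP: "set P = set (butlast P) \<union> {dl}" unfolding sP0 by simp
        have "d2 \<in> set (butlast P)" using d2(1) \<open>d2 \<noteq> dl\<close> unfolding sP by simp
        obtain m2 where m2: "is_walk X u (butlast P) m2" "is_walk X m2 [dl] w"
          using w(1) Pb is_walk_append[of X u "butlast P" "[dl]" w] by auto
        have m2s: "m2 = dstart X dl" using m2(2) by simp
        have "dstart X d2 \<in> set (map (dstart X) (butlast P) @ [m2]) \<and> dend X d2 \<in> set (map (dstart X) (butlast P) @ [m2])"
          using walk_dend_in[OF m2(1) \<open>d2 \<in> set (butlast P)\<close>] by auto
        moreover have "set (map (dstart X) (butlast P) @ [m2]) \<subseteq> set (map (dstart X) P)"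
          using m2s by (auto simp: sP)
        moreover have "w = dstart X d2 \<or> w = dend X d2" using dart_ends2[of w X d2] e'(3) d2(2) by auto
        ultimately show False using nw by auto
      qed
      have "distinct (map fst (drop i P))" using dfP by (simp add: drop_map[symmetric])
      moreover have "e' \<notin> fst ` set (drop i P)" using e'P set_drop_subset[of i P] by auto
      ultimately have dfC: "distinct (map fst C)" by (simp add: C_def d'_def)
      have "once_around_cycle X (dend X d') C"
        using Cw dC dfC by (simp add: once_around_cycle_def C_def)
      moreover have "fst ` set C \<subseteq> S" using w(2) e'S set_drop_subset[of i P] by (auto simp: C_def d'_def)
      ultimately show ?thesis by (auto simp: S_def)
    qed
  qed
qed


lemma decomp:
  assumes wf: "wf_digraph X"
  shows "z \<in> cycle_space X \<Longrightarrow> (z :: 'f \<Rightarrow> 'r::comm_ring_1) \<in> gen_submodule {cycle_vector X C | C y. once_around_cycle X y C}"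
proof (induction "card {e. z e \<noteq> 0}" arbitrary: z rule: less_induct)
  case less
  define CV where "CV = {(cycle_vector X C :: 'f \<Rightarrow> 'r) | C y. once_around_cycle X y C}"
  define S where "S = {e. z e \<noteq> 0}"
  have fS: "finite S" using less.prems by (simp add: cycle_space_def S_def)
  show ?case
  proof (cases "S = {}")
    case True
    then have "z = (\<lambda>_. 0)" by (auto simp: S_def fun_eq_iff)
    then show ?thesis by (simp only: gen_submodule.zero)
  next
    case False
    obtain C y where C: "once_around_cycle X y C" and CS: "fst ` set C \<subseteq> S"
      using find_cycle[OF wf less.prems] False by (auto simp: S_def)
    have Cne: "C \<noteq> []" and dC: "distinct (map fst C)" using C by (auto simp: once_around_cycle_def)
    define d where "d = hd C"
    have dC': "d \<in> set C" using Cne by (simp add: d_def)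
    define e where "e = fst d"
    define cv where "cv = (cycle_vector X C :: 'f \<Rightarrow> 'r)"
    have cve0: "cv e = (if tail X (fst d) = dstart X d \<and> head X (fst d) = dend X d then 1 else -1)"
      unfolding cv_def e_def by (rule cv_at[OF dC dC'])
    have sq: "cv e * cv e = 1" using cve0 by simp
    define c where "c = z e * cv e"
    define z' where "z' = (\<lambda>x. z x + (- c) * cv x)"
    have cvcs: "cv \<in> cycle_space X" unfolding cv_def by (rule cv_cs[OF C])
    have z'cs: "z' \<in> cycle_space X" unfolding z'_def by (rule cs_comb[OF less.prems cvcs])
    have z'e: "z' e = 0"
    proof -
      have "z' e = z e + (- (z e * cv e)) * cv e" by (simp add: z'_def c_def)
      also have "\<dots> = z e - z e * (cv e * cv e)" by (simp add: mult.assoc)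
      also have "\<dots> = 0" by (simp only: sq mult_1_right diff_self)
      finally show ?thesis .
    qed
    have sub: "{x. z' x \<noteq> 0} \<subseteq> S - {e}"
    proof
      fix x assume "x \<in> {x. z' x \<noteq> 0}"
      then have nz: "z' x \<noteq> 0" by simp
      have "x \<noteq> e" using nz z'e by auto
      moreover have "x \<in> S"
      proof (rule ccontr)
        assume "x \<notin> S"
        then have zx: "z x = 0" by (simp add: S_def)
        have "cv x = 0"
        proof (rule ccontr)
          assume "cv x \<noteq> 0"
          then have "x \<in> fst ` set C" unfolding cv_def by (rule cv_supp)
          then show False using CS \<open>x \<notin> S\<close> by auto
        qed
        then show False using nz zx by (simp add: z'_def)
      qed
      ultimately show "x \<in> S - {e}" by simp
    qed
    have eS: "e \<in> S" using CS dC' by (auto simp: e_def)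
    have "card {x. z' x \<noteq> 0} < card S"
    proof -
      have "card {x. z' x \<noteq> 0} \<le> card (S - {e})" using sub fS by (intro card_mono) auto
      also have "\<dots> < card S" by (rule card_Diff1_less[OF fS eS])
      finally show ?thesis .
    qed
    then have "card {x. z' x \<noteq> 0} < card {e. z e \<noteq> 0}" by (simp only: S_def)
    then have IH: "z' \<in> gen_submodule CV" unfolding CV_def by (rule less.hyps[OF _ z'cs])
    have cvCV: "cv \<in> CV" unfolding CV_def cv_def
      by (rule CollectI, intro exI conjI, rule refl, rule C)
    have "(\<lambda>x. z' x + c * cv x) \<in> gen_submodule CV" by (rule gen_submodule.step[OF IH cvCV])
    moreover have "(\<lambda>x. z' x + c * cv x) = z" by (rule ext) (simp add: z'_def add.assoc)
    ultimately have "z \<in> gen_submodule CV" by (simp only:)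
    then show ?thesis by (simp only: CV_def)
  qed
qed

lemma main_generic:
  fixes G :: "('v,'e) pre_digraph" and Gr :: "('w,'f) pre_digraph"
    and x0 :: 'v and y0 :: 'w and r :: nat
    and pV :: "'w \<Rightarrow> 'v" and pD :: "'f dart \<Rightarrow> 'e dart"
  assumes "r_local_covering r G x0 Gr y0 pV pD"
  shows "(cycle_space_r r Gr :: ('f \<Rightarrow> 'r::comm_ring_1) set) = cycle_space Gr"
proof -
  have wf: "wf_digraph Gr" using assms by (simp add: r_local_covering_def)
  interpret rcov G Gr pV pD r x0 y0
    using assms by unfold_locales (auto simp: r_local_covering_def wf_digraph.tail_in_verts[OF wf] wf_digraph.head_in_verts[OF wf])
  show ?thesis
  proof
    show "(cycle_space_r r Gr :: ('f \<Rightarrow> 'r) set) \<subseteq> cycle_space Gr"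
    proof
      fix z :: "'f \<Rightarrow> 'r" assume "z \<in> cycle_space_r r Gr"
      then have "z \<in> gen_submodule Sr" by (simp add: cycle_space_r_def)
      then show "z \<in> cycle_space Gr"
      proof (induction rule: gen_submodule.induct)
        case zero then show ?case by (rule cs_zero)
      next
        case (step z w c)
        then obtain W y where wd: "w = cycle_vector Gr W" and Wc: "once_around_cycle Gr y W" by blast
        have "(cycle_vector Gr W :: 'f \<Rightarrow> 'r) \<in> cycle_space Gr" by (rule cv_cs[OF Wc])
        then have "w \<in> cycle_space Gr" using wd by simp
        then show ?case by (rule cs_comb[OF step.IH])
      qed
    qed
  next
    show "cycle_space Gr \<subseteq> (cycle_space_r r Gr :: ('f \<Rightarrow> 'r) set)"
    proof
      fix z :: "'f \<Rightarrow> 'r" assume z: "z \<in> cycle_space Gr"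
      have sub: "{(cycle_vector Gr C :: 'f \<Rightarrow> 'r) | C y. once_around_cycle Gr y C} \<subseteq> (gen_submodule Sr :: ('f \<Rightarrow> 'r) set)"
      proof
        fix x assume "x \<in> {(cycle_vector Gr C :: 'f \<Rightarrow> 'r) | C y. once_around_cycle Gr y C}"
        then obtain C y where xd: "x = cycle_vector Gr C" and Cc: "once_around_cycle Gr y C" by blast
        have "(cycle_vector Gr C :: 'f \<Rightarrow> 'r) \<in> gen_submodule Sr" by (rule cycle_in_Zr[OF Cc])
        then show "x \<in> gen_submodule Sr" using xd by simp
      qed
      have "z \<in> gen_submodule Sr" by (rule gen_sub_gen[OF sub decomp[OF wf z]])
      then show "z \<in> cycle_space_r r Gr" by (simp add: cycle_space_r_def)
    qed
  qed
qed

theorem lemma4p6: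
  fixes G :: "('v,'e) pre_digraph" and Gr :: "('w,'f) pre_digraph"
    and x0 :: 'v and y0 :: 'w and r :: nat
    and pV :: "'w \<Rightarrow> 'v" and pD :: "'f dart \<Rightarrow> 'e dart"
  assumes "wf_digraph G" and "connected_graph G" and "x0 \<in> verts G"
    and "r_local_covering r G x0 Gr y0 pV pD"
  shows "(cycle_space_r r Gr :: ('f \<Rightarrow> int) set) = cycle_space Gr
       \<and> (cycle_space_r r Gr :: ('f \<Rightarrow> bit) set) = cycle_space Gr"
proof
  show "(cycle_space_r r Gr :: ('f \<Rightarrow> int) set) = cycle_space Gr" by (rule main_generic[OF assms(4)])
  show "(cycle_space_r r Gr :: ('f \<Rightarrow> bit) set) = cycle_space Gr" by (rule main_generic[OF assms(4)])
qed


end
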